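(* Let $\mathbf X_1,\dots,\mathbf X_n$ be i.i.d. samples in $\mathbb{R}^d$ from a continuous density $f$, and let $\hat f_{n,\ell}$ be the partitioned multivariate sample-spacing density estimator defined below. Assume that as $n\to\infty$, $\ell(n)^d=o(n)$ and $m_k/n_k\to 0$ (e.g. $n_k\to\infty$ with $m_k=\lfloor\sqrt{n_k}+1/2\rfloor$). Then $$\lim_{n\to\infty}\int_{\mathbb{R}^d}\hat f_{n,\ell}(\mathbf x)\,d\mathbf x=1.$$
   Context: Multivariate partitioned estimator: for an integer $\ell=\ell(n)$, divide the range $[\min_v X_{v,j},\max_v X_{v,j}]$ of each coordinate $j=1,\dots,d$ into $\ell$ equal-width intervals (width $(\max-\min)/\ell$); products give $\ell^d$ hyperrectangles $P_1,\dots,P_{\ell^d}$. Let $n_k$ be the number of samples in $P_k$, $m_k$ a positive integer spacing parameter, and $x^k_{j,(1)}\le\dots\le x^k_{j,(n_k)}$ the order statistics of the $j$-th coordinates of the samples in $P_k$, with $x^k_{j,(r)}=x^k_{j,(1)}$ for $r<1$ and $x^k_{j,(r)}=x^k_{j,(n_k)}$ for $r>n_k$. Grid points: $\xi^k_{j,a}=\frac{1}{2m_k}\sum_{r=a-m_k}^{a+m_k-1}x^k_{j,(r)}$ for $1\le a\le n_k$, $\xi^k_{j,0}=x^k_{j,(1)}$, $\xi^k_{j,n_k+1}=x^k_{j,(n_k)}$. For $\mathbf x=(x_1,\dots,x_d)$ with $\xi^k_{j,a_j}<x_j\le\xi^k_{j,a_j+1}$ for all $j$ (cell indices $0\le a_j\le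 n_k$), $$\hat f_{n,\ell}(\mathbf x)=\frac{n_k}{n}\prod_{j=1}^d\frac{2m_k}{n_k\,(x^k_{j,(a_j+m_k)}-x^k_{j,(a_j-m_k)})},$$ and $\hat f_{n,\ell}=0$ outside all such cells. Partitions with $n_k\le 1$ are skipped (contribute no density). *)

theory Defs
  imports "HOL-Probability.Probability" "HOL-Library.Landau_Symbols"
begin

text \<open>Order statistic with 1-based index r and clamping:
  x_(r) = x_(1) for r < 1, x_(r) = x_(n_k) for r > n_k.\<close>
definition ostat :: "real list \<Rightarrow> int \<Rightarrow> real" where
  "ostat ys r = sort ys ! (nat (max 1 (min r (int (length ys)))) - 1)"

definition grid :: "nat \<Rightarrow> real list \<Rightarrow> nat \<Rightarrow> real" where
  "grid mk ys a =
     (if a = 0 then ostat ys 1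
      else if a = length ys + 1 then ostat ys (int (length ys))
      else (\<Sum>r\<in>{int a - int mk .. int a + int mk - 1}. ostat ys r) / (2 * real mk))"

text \<open>Index (0-based) of the equal-width interval containing coordinate j of x;
  intervals are [lo + i w, lo + (i+1) w), the last one closed.\<close>
definition bin_index :: "nat \<Rightarrow> (real^'d) list \<Rightarrow> real^'d \<Rightarrow> 'd \<Rightarrow> nat" where
  "bin_index l xs x j =
     (let lo = Min (set (map (\<lambda>v. v $ j) xs));
          hi = Max (set (map (\<lambda>v. v $ j) xs));
          w = (hi - lo) / real l
      in nat (min (int l - 1) \<lfloor>(x $ j - lo) / w\<rfloor>))"

definition part_dens :: "nat \<Rightarrow> nat \<Rightarrow> (real^'d) list \<Rightarrow> real^'d \<Rightarrow> real" where
  "part_dens n mk S x =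
     (let nk = length S;
          col = (\<lambda>j. map (\<lambda>v. v $ j) S);
          incell = (\<lambda>a::'d \<Rightarrow> nat. \<forall>j. a j \<le> nk \<and>
                       grid mk (col j) (a j) < x $ j \<and> x $ j \<le> grid mk (col j) (a j + 1))
      in if nk \<le> 1 then 0
         else if (\<exists>a. incell a) then
           (let a = (THE a. incell a)
            in real nk / real n *
               (\<Prod>j\<in>UNIV. 2 * real mk /
                  (real nk * (ostat (col j) (int (a j) + int mk) - ostat (col j) (int (a j) - int mk)))))
         else 0)"

text \<open>The partitioned multivariate sample-spacing estimator, with l intervals per
  coordinate and spacing rule m (m_k = m n_k).  The cells of distinct hyperrectangles
  are disjoint, so summing the contributions is the pointwise definition.\<close>
definition fhat :: "nat \<Rightarrow> (nat \<Rightarrow> nat) \<Rightarrow> (real^'d) list \<Rightarrow> real^'d \<Rightarrow> real" where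
  "fhat l m xs x =
     (\<Sum>p\<in>{p :: 'd \<Rightarrow> nat. \<forall>j. p j < l}.
        (let S = filter (\<lambda>v. (\<lambda>j. bin_index l xs v j) = p) xs
         in part_dens (length xs) (m (length S)) S x))"

end

theory Submission
  imports Defs
begin

lemma ostat_idx:
  assumes "ys \<noteq> []"
  shows "nat (max 1 (min r (int (length ys)))) - 1 < length ys"
  using assms by (cases ys) auto

lemma ostat_mono:
  assumes "ys \<noteq> []" "r \<le> r'"
  shows "ostat ys r \<le> ostat ys r'"
  unfolding ostat_def
  by (rule sorted_nth_mono) (use assms ostat_idx[OF assms(1), of r'] in \<open>auto simp: nat_le_iff intro!: diff_le_mono\<close>)

lemma ostat_strict:
  assumes "distinct ys" "1 \<le> r" "r < r'" "r' \<le> int (length ys)"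
  shows "ostat ys r < ostat ys r'"
proof -
  have "sorted_wrt (<) (sort ys)" using assms(1) by (simp add: strict_sorted_iff)
  then show ?thesis unfolding ostat_def
    by (rule sorted_wrt_nth_less) (use assms in auto)
qed

lemma ostat_low: "r \<le> 1 \<Longrightarrow> ostat ys r = ostat ys 1"
  unfolding ostat_def by (cases ys) auto

lemma ostat_high: "r \<ge> int (length ys) \<Longrightarrow> ostat ys r = ostat ys (int (length ys))"
  unfolding ostat_def by (cases ys) auto

lemma grid_mid:
  "1 \<le> a \<Longrightarrow> a \<le> length ys \<Longrightarrow>
   grid mk ys a = (\<Sum>r\<in>{int a - int mk .. int a + int mk - 1}. ostat ys r) / (2 * real mk)"
  unfolding grid_def by auto

lemma avg_bounds:
  fixes g :: "int \<Rightarrow> real"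
  assumes "mk > 0" "\<And>r. r \<in> {int a - int mk .. int a + int mk - 1} \<Longrightarrow> c \<le> g r \<and> g r \<le> C"
  shows "c \<le> (\<Sum>r\<in>{int a - int mk .. int a + int mk - 1}. g r) / (2 * real mk)"
    and "(\<Sum>r\<in>{int a - int mk .. int a + int mk - 1}. g r) / (2 * real mk) \<le> C"
proof -
  have card: "card {int a - int mk .. int a + int mk - 1} = 2 * mk" by simp
  have "(\<Sum>r\<in>{int a - int mk .. int a + int mk - 1}. c) \<le> (\<Sum>r\<in>{int a - int mk .. int a + int mk - 1}. g r)"
    by (rule sum_mono) (use assms in auto)
  then have "2 * real mk * c \<le> (\<Sum>r\<in>{int a - int mk .. int a + int mk - 1}. g r)"
    using card by simp
  then show "c \<le> (\<Sum>r\<in>{int a - int mk .. int a + int mk - 1}. g r) / (2 * real mk)"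
    using assms(1) by (simp add: field_simps)
  have "(\<Sum>r\<in>{int a - int mk .. int a + int mk - 1}. g r) \<le> (\<Sum>r\<in>{int a - int mk .. int a + int mk - 1}. C)"
    by (rule sum_mono) (use assms in auto)
  then have "(\<Sum>r\<in>{int a - int mk .. int a + int mk - 1}. g r) \<le> 2 * real mk * C"
    using card by simp
  then show "(\<Sum>r\<in>{int a - int mk .. int a + int mk - 1}. g r) / (2 * real mk) \<le> C"
    using assms(1) by (simp add: field_simps)
qed

lemma grid_diff:
  assumes "mk > 0" "1 \<le> a" "a + 1 \<le> length ys"
  shows "grid mk ys (a + 1) - grid mk ys a
         = (ostat ys (int a + int mk) - ostat ys (int a - int mk)) / (2 * real mk)"
proof -
  define lo where "lo = int a - int mk"
  define hi where "hi = int a + int mk - 1"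
  have "int mk \<ge> 1" using assms(1) by simp
  then have lh: "lo \<le> hi" unfolding lo_def hi_def by simp
  have s1: "{int (a+1) - int mk .. int (a+1) + int mk - 1} = insert (hi + 1) {lo + 1 .. hi}"
    using lh unfolding lo_def hi_def by auto
  have s2: "{lo .. hi} = insert lo {lo + 1 .. hi}" using lh by auto
  have e1: "(\<Sum>r\<in>{int (a+1) - int mk .. int (a+1) + int mk - 1}. ostat ys r) = ostat ys (hi+1) + (\<Sum>r\<in>{lo+1..hi}. ostat ys r)"
    unfolding s1 by (rule sum.insert) auto
  have e2: "(\<Sum>r\<in>{int a - int mk .. int a + int mk - 1}. ostat ys r) = ostat ys lo + (\<Sum>r\<in>{lo+1..hi}. ostat ys r)"
    unfolding lo_def[symmetric] hi_def[symmetric] s2 by (rule sum.insert) auto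
  have g1: "grid mk ys (a+1) = (\<Sum>r\<in>{int (a+1) - int mk .. int (a+1) + int mk - 1}. ostat ys r) / (2 * real mk)"
    by (rule grid_mid) (use assms in auto)
  have g2: "grid mk ys a = (\<Sum>r\<in>{int a - int mk .. int a + int mk - 1}. ostat ys r) / (2 * real mk)"
    by (rule grid_mid) (use assms in auto)
  have "grid mk ys (a + 1) = (ostat ys (hi + 1) + (\<Sum>r\<in>{lo+1..hi}. ostat ys r)) / (2 * real mk)"
    using g1 e1 by simp
  moreover have "grid mk ys a = (ostat ys lo + (\<Sum>r\<in>{lo+1..hi}. ostat ys r)) / (2 * real mk)"
    using g2 e2 by simp
  ultimately show ?thesis unfolding lo_def hi_def by (simp add: diff_divide_distrib add_divide_distrib)
qed

lemma grid_step_mono: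
  assumes "mk > 0" "ys \<noteq> []" "a \<le> length ys"
  shows "grid mk ys a \<le> grid mk ys (a + 1)"
proof -
  consider "a = 0" | "1 \<le> a" "a + 1 \<le> length ys" | "a = length ys" "a \<ge> 1"
    using assms by (cases "a = 0"; cases "a + 1 \<le> length ys") auto
  then show ?thesis
  proof cases
    case 1
    have "ostat ys (int 1 - int mk) \<le> (\<Sum>r\<in>{int 1 - int mk .. int 1 + int mk - 1}. ostat ys r) / (2 * real mk)"
      by (rule avg_bounds(1)[where C="ostat ys (int 1 + int mk)"]) (use assms in \<open>auto intro: ostat_mono\<close>)
    also have "\<dots> = grid mk ys 1"
      by (rule grid_mid[symmetric]) (use assms in \<open>auto simp: Suc_le_eq\<close>)
    moreover have "ostat ys (int 1 - int mk) = ostat ys 1" by (rule ostat_low) simp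
    ultimately have "ostat ys 1 \<le> grid mk ys 1" by simp
    then show ?thesis using 1 by (simp add: grid_def)
  next
    case 2
    have "0 \<le> (ostat ys (int a + int mk) - ostat ys (int a - int mk)) / (2 * real mk)"
      using ostat_mono[OF assms(2), of "int a - int mk" "int a + int mk"] by simp
    then show ?thesis using grid_diff[OF assms(1) 2] by linarith
  next
    case 3
    have "grid mk ys a = (\<Sum>r\<in>{int a - int mk .. int a + int mk - 1}. ostat ys r) / (2 * real mk)"
      by (rule grid_mid) (use 3 in simp_all)
    also have "\<dots> \<le> ostat ys (int a + int mk)"
      by (rule avg_bounds(2)[where c="ostat ys (int a - int mk)"]) (use assms in \<open>auto intro: ostat_mono\<close>)
    moreover have "ostat ys (int a + int mk) = ostat ys (int (length ys))" by (rule ostat_high) (use 3 in simp)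
    ultimately have "grid mk ys a \<le> ostat ys (int (length ys))" by simp
    then show ?thesis using 3 by (simp add: grid_def)
  qed
qed

lemma grid_mono:
  assumes "mk > 0" "ys \<noteq> []" "a \<le> b" "b \<le> length ys + 1"
  shows "grid mk ys a \<le> grid mk ys b"
  using assms(3,4)
proof (induction b)
  case 0 then show ?case by simp
next
  case (Suc b)
  show ?case
  proof (cases "a = Suc b")
    case True then show ?thesis by simp
  next
    case False
    then have "grid mk ys a \<le> grid mk ys b" using Suc by simp
    also have "\<dots> \<le> grid mk ys (b + 1)" using Suc by (intro grid_step_mono assms) auto
    finally show ?thesis by simp
  qed
qed

lemma grid_first_gap:
  assumes "mk > 0" "ys \<noteq> []"
  shows "grid mk ys 1 - grid mk ys 0 \<le> ostat ys (int 0 + int mk) - ostat ys (int 0 - int mk)"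
proof -
  have "grid mk ys 1 = (\<Sum>r\<in>{int 1 - int mk .. int 1 + int mk - 1}. ostat ys r) / (2 * real mk)"
    by (rule grid_mid) (use assms in \<open>auto simp: Suc_le_eq\<close>)
  also have "\<dots> \<le> ostat ys (int mk)"
    by (rule avg_bounds(2)[where c="ostat ys (int 1 - int mk)"]) (use assms in \<open>auto intro: ostat_mono\<close>)
  finally have "grid mk ys 1 \<le> ostat ys (int mk)" .
  moreover have "grid mk ys 0 = ostat ys (int 0 - int mk)"
  proof -
    have "ostat ys (int 0 - int mk) = ostat ys 1" by (rule ostat_low) simp
    then show ?thesis by (simp add: grid_def)
  qed
  ultimately show ?thesis by simp
qed

lemma grid_last_gap:
  assumes "mk > 0" "ys \<noteq> []"
  shows "grid mk ys (length ys + 1) - grid mk ys (length ys)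
     \<le> ostat ys (int (length ys) + int mk) - ostat ys (int (length ys) - int mk)"
proof -
  have "ostat ys (int (length ys) - int mk) \<le> (\<Sum>r\<in>{int (length ys) - int mk .. int (length ys) + int mk - 1}. ostat ys r) / (2 * real mk)"
    by (rule avg_bounds(1)[where C="ostat ys (int (length ys) + int mk)"]) (use assms in \<open>auto intro: ostat_mono\<close>)
  also have "\<dots> = grid mk ys (length ys)"
    by (rule grid_mid[symmetric]) (use assms in \<open>auto simp: Suc_le_eq\<close>)
  finally have "ostat ys (int (length ys) - int mk) \<le> grid mk ys (length ys)" .
  moreover have "grid mk ys (length ys + 1) = ostat ys (int (length ys) + int mk)"
  proof -
    have "ostat ys (int (length ys) + int mk) = ostat ys (int (length ys))" by (rule ostat_high) simp
    then show ?thesis by (simp add: grid_def)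
  qed
  ultimately show ?thesis by simp
qed

definition tt :: "nat \<Rightarrow> real list \<Rightarrow> nat \<Rightarrow> real" where
  "tt mk ys a = 2 * real mk * (grid mk ys (a + 1) - grid mk ys a) /
     (real (length ys) * (ostat ys (int a + int mk) - ostat ys (int a - int mk)))"

lemma frac_le:
  fixes u v c :: real
  assumes "0 \<le> u" "u \<le> v" "0 \<le> c"
  shows "c * u / v \<le> c"
proof (cases "v = 0")
  case False
  then have "u / v \<le> 1" using assms by (simp add: divide_le_eq_1)
  then have "c * (u / v) \<le> c * 1" using assms by (intro mult_left_mono) auto
  then show ?thesis by simp
qed (use assms in simp)

lemma tt_nonneg:
  assumes "mk > 0" "ys \<noteq> []" "a \<le> length ys"
  shows "0 \<le> tt mk ys a"
proof -
  have "0 \<le> grid mk ys (a + 1) - grid mk ys a" using grid_step_mono[OF assms] by simp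
  moreover have "0 \<le> ostat ys (int a + int mk) - ostat ys (int a - int mk)"
    using ostat_mono[OF assms(2), of "int a - int mk" "int a + int mk"] by simp
  ultimately show ?thesis unfolding tt_def
    by (intro divide_nonneg_nonneg mult_nonneg_nonneg) simp_all
qed

lemma tt_le_gap:
  assumes "mk > 0" "ys \<noteq> []" "a \<le> length ys"
    and "grid mk ys (a + 1) - grid mk ys a \<le> ostat ys (int a + int mk) - ostat ys (int a - int mk)"
  shows "tt mk ys a \<le> 2 * real mk / real (length ys)"
proof -
  have "tt mk ys a = (2 * real mk / real (length ys)) * (grid mk ys (a + 1) - grid mk ys a) /
     (ostat ys (int a + int mk) - ostat ys (int a - int mk))"
    unfolding tt_def by simp
  also have "\<dots> \<le> 2 * real mk / real (length ys)"
    using grid_step_mono[OF assms(1-3)] assms(4) by (intro frac_le) auto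
  finally show ?thesis .
qed

lemma tt_mid:
  assumes "mk > 0" "1 \<le> a" "a + 1 \<le> length ys"
  shows "tt mk ys a = (if ostat ys (int a + int mk) - ostat ys (int a - int mk) = 0 then 0
                       else 1 / real (length ys))"
proof -
  define D where "D = ostat ys (int a + int mk) - ostat ys (int a - int mk)"
  have "tt mk ys a = 2 * real mk * (D / (2 * real mk)) / (real (length ys) * D)"
    unfolding tt_def grid_diff[OF assms] D_def ..
  also have "\<dots> = (if D = 0 then 0 else 1 / real (length ys))"
    using assms(1) by auto
  finally show ?thesis unfolding D_def .
qed

lemma tt_mid_le:
  assumes "mk > 0" "1 \<le> a" "a + 1 \<le> length ys"
  shows "tt mk ys a \<le> 1 / real (length ys)"
  using tt_mid[OF assms] by auto

lemma tt_mid_distinct: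
  assumes "mk > 0" "1 \<le> a" "a + 1 \<le> length ys" "distinct ys"
  shows "tt mk ys a = 1 / real (length ys)"
proof -
  have "ostat ys (max 1 (int a - int mk)) < ostat ys (min (int (length ys)) (int a + int mk))"
    using assms by (intro ostat_strict) auto
  moreover have "ostat ys (max 1 (int a - int mk)) = ostat ys (int a - int mk)"
  proof (cases "int a - int mk \<le> 1")
    case True
    then show ?thesis using ostat_low[OF True, of ys] by (simp add: max_def)
  qed (simp add: max_def)
  moreover have "ostat ys (min (int (length ys)) (int a + int mk)) = ostat ys (int a + int mk)"
  proof (cases "int a + int mk \<ge> int (length ys)")
    case True
    then show ?thesis using ostat_high[OF True] by (simp add: min_def)
  qed (simp add: min_def)
  ultimately show ?thesis using tt_mid[OF assms(1-3)] by auto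
qed

lemma tsum_split:
  fixes N :: nat
  assumes "N \<ge> 2"
  shows "(\<Sum>a\<le>N. g a) = g 0 + (\<Sum>a\<in>{1..<N}. g a) + (g N :: real)"
proof -
  have "{..N} = insert N (insert 0 {1..<N})" using assms by auto
  then show ?thesis using assms by (simp add: add.commute add.left_commute)
qed

lemma tsum_upper:
  assumes "mk > 0" "length ys \<ge> 2"
  shows "(\<Sum>a\<le>length ys. tt mk ys a) \<le> 1 + 4 * real mk / real (length ys)"
proof -
  define N where "N = length ys"
  have ne: "ys \<noteq> []" using assms by auto
  have "(\<Sum>a\<in>{1..<N}. tt mk ys a) \<le> (\<Sum>a\<in>{1..<N}. 1 / real N)"
    by (rule sum_mono) (use tt_mid_le[OF assms(1)] in \<open>auto simp: N_def\<close>)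
  also have "\<dots> = (real N - 1) / real N" using assms by (simp add: N_def of_nat_diff)
  also have "\<dots> \<le> 1" by (cases "N = 0") (auto simp: field_simps)
  finally have mid: "(\<Sum>a\<in>{1..<N}. tt mk ys a) \<le> 1" .
  have t0: "tt mk ys 0 \<le> 2 * real mk / real N"
    unfolding N_def using grid_first_gap[OF assms(1) ne] by (intro tt_le_gap assms ne) auto
  have tN: "tt mk ys N \<le> 2 * real mk / real N"
    unfolding N_def using grid_last_gap[OF assms(1) ne] by (intro tt_le_gap assms ne) auto
  show ?thesis
    unfolding N_def[symmetric] using tsum_split[of N "tt mk ys"] assms mid t0 tN
    by (simp add: N_def)
qed

lemma tsum_lower:
  assumes "mk > 0" "length ys \<ge> 2" "distinct ys"
  shows "(real (length ys) - 1) / real (length ys) \<le> (\<Sum>a\<le>length ys. tt mk ys a)"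
proof -
  define N where "N = length ys"
  have ne: "ys \<noteq> []" using assms by auto
  have "(\<Sum>a\<in>{1..<N}. tt mk ys a) = (\<Sum>a\<in>{1..<N}. 1 / real N)"
    by (rule sum.cong) (use tt_mid_distinct[OF assms(1) _ _ assms(3)] in \<open>auto simp: N_def\<close>)
  also have "\<dots> = (real N - 1) / real N" using assms by (simp add: N_def of_nat_diff)
  finally have mid: "(\<Sum>a\<in>{1..<N}. tt mk ys a) = (real N - 1) / real N" .
  have "0 \<le> tt mk ys 0" "0 \<le> tt mk ys N"
    using tt_nonneg[OF assms(1) ne] by (auto simp: N_def)
  then show ?thesis
    unfolding N_def[symmetric] using tsum_split[of N "tt mk ys"] assms mid
    by (simp add: N_def)
qed

lemma hbox:
  fixes lo hi :: "'d::finite \<Rightarrow> real"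
  assumes le: "\<And>j. lo j \<le> hi j"
  defines "B \<equiv> {x::real^'d. \<forall>j. lo j < x$j \<and> x$j \<le> hi j}"
  shows "B \<in> sets lborel" "emeasure lborel B < \<infinity>" "measure lborel B = (\<Prod>j\<in>UNIV. hi j - lo j)"
proof -
  show Bs: "B \<in> sets lborel" unfolding B_def by measurable
  define a :: "real^'d" where "a = (\<chi> j. lo j)"
  define b :: "real^'d" where "b = (\<chi> j. hi j)"
  have sub: "B \<subseteq> cbox a b" and sub2: "box a b \<subseteq> B"
    unfolding B_def a_def b_def by (auto simp: mem_box_cart less_le)
  then show "emeasure lborel B < \<infinity>"
    by (metis emeasure_lborel_cbox_finite emeasure_mono order_le_less_trans sets_lborel cbox_borel)
  have null: "cbox a b - B \<in> null_sets lborel"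
    by (rule null_sets_subset[OF null_sets_cbox_Diff_box]) (use Bs sub2 in auto)
  have "measure lborel B = measure lborel (cbox a b - (cbox a b - B))"
    using sub by (metis Diff_Diff_Int inf.absorb_iff2)
  also have "\<dots> = measure lborel (cbox a b)"
    by (rule measure_Diff_null_set) (use null in auto)
  also have "\<dots> = (\<Prod>j\<in>UNIV. hi j - lo j)"
  proof -
    have "cbox a b \<noteq> {}" using le by (auto simp: a_def b_def interval_eq_empty_cart(2) not_less)
    then show ?thesis by (simp add: content_cbox_cart a_def b_def)
  qed
  finally show "measure lborel B = (\<Prod>j\<in>UNIV. hi j - lo j)" .
qed

lemma cell_unique_1d:
  assumes "mk > 0" "ys \<noteq> []" "a \<le> length ys" "b \<le> length ys"
    and "grid mk ys a < x" "x \<le> grid mk ys (a + 1)"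
    and "grid mk ys b < x" "x \<le> grid mk ys (b + 1)"
  shows "a = b"
proof (rule ccontr)
  assume "a \<noteq> b"
  then consider "a + 1 \<le> b" | "b + 1 \<le> a" by linarith
  then show False
  proof cases
    case 1
    then have "grid mk ys (a + 1) \<le> grid mk ys b" using assms by (intro grid_mono) auto
    then show False using assms by linarith
  next
    case 2
    then have "grid mk ys (b + 1) \<le> grid mk ys a" using assms by (intro grid_mono) auto
    then show False using assms by linarith
  qed
qed

definition colS :: "(real^'d) list \<Rightarrow> 'd \<Rightarrow> real list" where
  "colS S j = map (\<lambda>v. v $ j) S"

definition AA :: "nat \<Rightarrow> ('d \<Rightarrow> nat) set" where
  "AA N = PiE UNIV (\<lambda>_. {..N})"

definition cellbox :: "nat \<Rightarrow> (real^'d) list \<Rightarrow> ('d \<Rightarrow> nat) \<Rightarrow> (real^'d) set" where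
  "cellbox mk S a = {x. \<forall>j. grid mk (colS S j) (a j) < x$j \<and> x$j \<le> grid mk (colS S j) (a j + 1)}"

definition cval :: "nat \<Rightarrow> nat \<Rightarrow> (real^'d) list \<Rightarrow> ('d \<Rightarrow> nat) \<Rightarrow> real" where
  "cval n mk S a = real (length S) / real n *
     (\<Prod>j\<in>UNIV. 2 * real mk / (real (length S) *
        (ostat (colS S j) (int (a j) + int mk) - ostat (colS S j) (int (a j) - int mk))))"

lemma AA_iff: "a \<in> AA N \<longleftrightarrow> (\<forall>j. a j \<le> N)"
  by (auto simp: AA_def PiE_UNIV_domain)

lemma finite_AA: "finite (AA N :: ('d::finite \<Rightarrow> nat) set)"
  unfolding AA_def by (intro finite_PiE) auto

lemma pd_eq:
  fixes S :: "(real^'d) list"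
  assumes "mk > 0" "length S \<ge> 2"
  shows "part_dens n mk S x = (\<Sum>a\<in>(AA (length S) :: ('d \<Rightarrow> nat) set). indicator (cellbox mk S a) x * cval n mk S a)"
proof -
  define nk where "nk = length S"
  have ne: "colS S j \<noteq> []" for j using assms by (auto simp: colS_def)
  have len: "length (colS S j) = nk" for j by (simp add: colS_def nk_def)
  define inc where "inc = (\<lambda>a::'d \<Rightarrow> nat. \<forall>j. a j \<le> nk \<and>
        grid mk (colS S j) (a j) < x $ j \<and> x $ j \<le> grid mk (colS S j) (a j + 1))"
  have inc_iff: "inc a \<longleftrightarrow> a \<in> AA nk \<and> x \<in> cellbox mk S a" for a
    by (auto simp: inc_def AA_iff cellbox_def)
  have uniq: "a = b" if "inc a" "inc b" for a b
  proof
    fix j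
    show "a j = b j"
      using that unfolding inc_def
      by (intro cell_unique_1d[OF assms(1) ne[of j]]) (auto simp: len)
  qed
  have pd: "part_dens n mk S x = (if \<exists>a. inc a then cval n mk S (THE a. inc a) else 0)"
    using assms unfolding part_dens_def Let_def inc_def cval_def colS_def nk_def by simp
  show ?thesis
  proof (cases "\<exists>a. inc a")
    case True
    then obtain a0 where a0: "inc a0" by blast
    have the: "(THE a. inc a) = a0" using a0 uniq by blast
    have "(\<Sum>a\<in>(AA nk :: ('d \<Rightarrow> nat) set). indicator (cellbox mk S a) x * cval n mk S a)
        = (\<Sum>a\<in>(AA nk :: ('d \<Rightarrow> nat) set). if a = a0 then cval n mk S a else 0)"
    proof (rule sum.cong)
      fix a :: "'d \<Rightarrow> nat" assume "a \<in> AA nk"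
      note aA = this
      show "indicator (cellbox mk S a) x * cval n mk S a = (if a = a0 then cval n mk S a else 0)"
      proof (cases "a = a0")
        case True
        have "x \<in> cellbox mk S a0" using a0 inc_iff[of a0] by blast
        then show ?thesis using True by simp
      next
        case False
        have "x \<notin> cellbox mk S a" using False uniq[of a a0] a0 inc_iff[of a] aA by blast
        then show ?thesis using False by simp
      qed
    qed simp
    also have "\<dots> = cval n mk S a0"
      using a0 inc_iff[of a0] finite_AA[where 'd='d] by (simp add: sum.delta)
    finally show ?thesis using pd True the nk_def by simp
  next
    case False
    then have "(\<Sum>a\<in>(AA nk :: ('d \<Rightarrow> nat) set). indicator (cellbox mk S a) x * cval n mk S a) = 0"
    proof (intro sum.neutral ballI)
      fix a :: "'d \<Rightarrow> nat" assume aA: "a \<in> AA nk"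
      have "x \<notin> cellbox mk S a" using False inc_iff[of a] aA by blast
      then show "indicator (cellbox mk S a) x * cval n mk S a = 0" by simp
    qed
    then show ?thesis using pd False nk_def by simp
  qed
qed

lemma cellbox_props:
  fixes S :: "(real^'d) list"
  assumes "mk > 0" "length S \<ge> 2" "a \<in> AA (length S)"
  shows "cellbox mk S a \<in> sets lborel" "emeasure lborel (cellbox mk S a) < \<infinity>"
    "measure lborel (cellbox mk S a) = (\<Prod>j\<in>UNIV. grid mk (colS S j) (a j + 1) - grid mk (colS S j) (a j))"
proof -
  have le: "grid mk (colS S j) (a j) \<le> grid mk (colS S j) (a j + 1)" for j
    using assms by (intro grid_step_mono) (auto simp: colS_def AA_iff)
  note h = hbox[of "\<lambda>j. grid mk (colS S j) (a j)" "\<lambda>j. grid mk (colS S j) (a j + 1)", OF le]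
  show "cellbox mk S a \<in> sets lborel" unfolding cellbox_def by (rule h(1))
  show "emeasure lborel (cellbox mk S a) < \<infinity>" unfolding cellbox_def by (rule h(2))
  show "measure lborel (cellbox mk S a) = (\<Prod>j\<in>UNIV. grid mk (colS S j) (a j + 1) - grid mk (colS S j) (a j))"
    unfolding cellbox_def by (rule h(3))
qed

lemma pd_integral:
  fixes S :: "(real^'d) list"
  assumes "mk > 0" "length S \<ge> 2"
  shows "integrable lborel (part_dens n mk S)"
    and "integral\<^sup>L lborel (part_dens n mk S) =
           real (length S) / real n * (\<Prod>j\<in>UNIV. \<Sum>c\<le>length S. tt mk (colS S j) c)"
proof -
  define nk where "nk = length S"
  have pdf: "part_dens n mk S = (\<lambda>x. \<Sum>a\<in>(AA nk :: ('d \<Rightarrow> nat) set). indicator (cellbox mk S a) x * cval n mk S a)"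
    using pd_eq[OF assms] nk_def by auto
  have intg: "integrable lborel (\<lambda>x. indicator (cellbox mk S a) x * cval n mk S a)"
    if "a \<in> AA nk" for a :: "'d \<Rightarrow> nat"
  proof -
    have "integrable lborel (indicator (cellbox mk S a) :: _ \<Rightarrow> real)"
      using cellbox_props[OF assms, of a] that nk_def by (intro integrable_real_indicator) auto
    then show ?thesis by (rule integrable_mult_left)
  qed
  show "integrable lborel (part_dens n mk S)"
    unfolding pdf by (rule Bochner_Integration.integrable_sum) (rule intg)
  have "integral\<^sup>L lborel (part_dens n mk S)
      = (\<Sum>a\<in>(AA nk :: ('d \<Rightarrow> nat) set). integral\<^sup>L lborel (\<lambda>x. indicator (cellbox mk S a) x * cval n mk S a))"
    unfolding pdf by (rule Bochner_Integration.integral_sum) (rule intg)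
  also have "\<dots> = (\<Sum>a\<in>(AA nk :: ('d \<Rightarrow> nat) set). measure lborel (cellbox mk S a) * cval n mk S a)"
    by (rule sum.cong) (use cellbox_props(1)[OF assms] nk_def in auto)
  also have "\<dots> = (\<Sum>a\<in>(AA nk :: ('d \<Rightarrow> nat) set). real nk / real n * (\<Prod>j\<in>UNIV. tt mk (colS S j) (a j)))"
  proof (rule sum.cong)
    fix a :: "'d \<Rightarrow> nat" assume a: "a \<in> AA nk"
    have "measure lborel (cellbox mk S a) * cval n mk S a
       = real nk / real n * ((\<Prod>j\<in>UNIV. 2 * real mk / (real nk *
        (ostat (colS S j) (int (a j) + int mk) - ostat (colS S j) (int (a j) - int mk)))) *
          (\<Prod>j\<in>UNIV. grid mk (colS S j) (a j + 1) - grid mk (colS S j) (a j)))"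
      using cellbox_props(3)[OF assms, of a] a nk_def by (simp add: cval_def)
    also have "\<dots> = real nk / real n * (\<Prod>j\<in>UNIV. tt mk (colS S j) (a j))"
      by (simp add: prod.distrib[symmetric] tt_def colS_def nk_def)
    finally show "measure lborel (cellbox mk S a) * cval n mk S a = real nk / real n * (\<Prod>j\<in>UNIV. tt mk (colS S j) (a j))" .
  qed simp
  also have "\<dots> = real nk / real n * (\<Sum>a\<in>(AA nk :: ('d \<Rightarrow> nat) set). \<Prod>j\<in>UNIV. tt mk (colS S j) (a j))"
    by (simp add: sum_distrib_left)
  also have "(\<Sum>a\<in>(AA nk :: ('d \<Rightarrow> nat) set). \<Prod>j\<in>UNIV. tt mk (colS S j) (a j)) = (\<Prod>j\<in>UNIV. \<Sum>c\<le>nk. tt mk (colS S j) c)"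
    unfolding AA_def by (subst prod_sum_PiE) auto
  finally show "integral\<^sup>L lborel (part_dens n mk S) =
           real (length S) / real n * (\<Prod>j\<in>UNIV. \<Sum>c\<le>length S. tt mk (colS S j) c)"
    by (simp add: nk_def)
qed

lemma pd_small: "length S \<le> 1 \<Longrightarrow> part_dens n mk S = (\<lambda>_. 0)"
  by (auto simp: part_dens_def Let_def)

lemma pd_bounds:
  fixes S :: "(real^'d) list"
  assumes mk: "mk > 0" and n: "n > 0"
  shows "integrable lborel (part_dens n mk S)"
    and "integral\<^sup>L lborel (part_dens n mk S) \<le>
           real (length S) / real n * (if length S \<le> 1 then 0 else (1 + 4 * real mk / real (length S)) ^ CARD('d))"
    and "(\<And>j. distinct (colS S j)) \<Longrightarrow>
           (real (length S) - real CARD('d)) / real n \<le> integral\<^sup>L lborel (part_dens n mk S)"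
proof -
  define nk where "nk = length S"
  have d1: "real CARD('d) \<ge> 1" by (simp add: Suc_le_eq)
  show "integrable lborel (part_dens n mk S)"
  proof (cases "nk \<le> 1")
    case True then show ?thesis using pd_small[of S n mk] nk_def by simp
  next
    case False then show ?thesis using pd_integral(1)[OF mk, of S] nk_def by simp
  qed
  have main: "integral\<^sup>L lborel (part_dens n mk S) \<le>
           real nk / real n * (if nk \<le> 1 then 0 else (1 + 4 * real mk / real nk) ^ CARD('d))
         \<and> ((\<forall>j. distinct (colS S j)) \<longrightarrow>
           (real nk - real CARD('d)) / real n \<le> integral\<^sup>L lborel (part_dens n mk S))"
  proof (cases "nk \<le> 1")
    case True
    then have z: "integral\<^sup>L lborel (part_dens n mk S) = 0" using pd_small[of S n mk] nk_def by simp
    have "real nk \<le> 1" using True by simp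
    then have "real nk - real CARD('d) \<le> 0" using d1 by linarith
    then have "(real nk - real CARD('d)) / real n \<le> 0" using n by (simp add: divide_nonpos_pos)
    then show ?thesis using z True by simp
  next
    case False
    then have nk2: "length S \<ge> 2" using nk_def by simp
    define T where "T = (\<lambda>j. \<Sum>c\<le>nk. tt mk (colS S j) c)"
    have I: "integral\<^sup>L lborel (part_dens n mk S) = real nk / real n * (\<Prod>j\<in>UNIV. T j)"
      using pd_integral(2)[OF mk nk2, of n] by (simp add: T_def nk_def)
    have lenc: "length (colS S j) = nk" for j by (simp add: colS_def nk_def)
    have Tnn: "0 \<le> T j" for j
      unfolding T_def using nk2 lenc[of j] by (intro sum_nonneg tt_nonneg mk) (auto simp: nk_def)
    have Tup: "T j \<le> 1 + 4 * real mk / real nk" for j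
      using tsum_upper[OF mk, of "colS S j"] nk2 lenc[of j] by (simp add: T_def nk_def)
    have "(\<Prod>j\<in>UNIV. T j) \<le> (\<Prod>j\<in>(UNIV::'d set). 1 + 4 * real mk / real nk)"
      by (intro prod_mono) (use Tnn Tup in auto)
    also have "\<dots> = (1 + 4 * real mk / real nk) ^ CARD('d)" by simp
    finally have up: "(\<Prod>j\<in>UNIV. T j) \<le> (1 + 4 * real mk / real nk) ^ CARD('d)" .
    have "real nk / real n * (\<Prod>j\<in>UNIV. T j) \<le> real nk / real n * (1 + 4 * real mk / real nk) ^ CARD('d)"
      by (rule mult_left_mono[OF up]) simp
    then have upper: "integral\<^sup>L lborel (part_dens n mk S) \<le>
           real nk / real n * (if nk \<le> 1 then 0 else (1 + 4 * real mk / real nk) ^ CARD('d))"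
      using I False by simp
    have lower: "(real nk - real CARD('d)) / real n \<le> integral\<^sup>L lborel (part_dens n mk S)"
      if dist: "\<forall>j. distinct (colS S j)"
    proof -
      have Tlo: "(real nk - 1) / real nk \<le> T j" for j
        using tsum_lower[OF mk, of "colS S j"] nk2 lenc[of j] dist by (simp add: T_def nk_def)
      have nkpos: "real nk > 0" using nk2 nk_def by (cases S) auto
      have q0: "0 \<le> (real nk - 1) / real nk" using nkpos nk2 nk_def by (simp add: Suc_le_eq)
      have "((real nk - 1) / real nk) ^ CARD('d) = (\<Prod>j\<in>(UNIV::'d set). (real nk - 1) / real nk)" by simp
      also have "\<dots> \<le> (\<Prod>j\<in>UNIV. T j)"
        by (intro prod_mono) (use Tlo q0 in auto)
      finally have lo1: "((real nk - 1) / real nk) ^ CARD('d) \<le> (\<Prod>j\<in>UNIV. T j)" .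
      have "1 + real CARD('d) * (- 1 / real nk) \<le> (1 + (- 1 / real nk)) ^ CARD('d)"
        by (rule Bernoulli_inequality) (use nkpos nk2 nk_def in \<open>simp add: field_simps\<close>)
      also have "1 + (- 1 / real nk) = (real nk - 1) / real nk" using nkpos by (simp add: field_simps)
      finally have "1 - real CARD('d) / real nk \<le> (\<Prod>j\<in>UNIV. T j)" using lo1 by simp
      then have "real nk / real n * (1 - real CARD('d) / real nk) \<le> real nk / real n * (\<Prod>j\<in>UNIV. T j)"
        by (rule mult_left_mono) simp
      moreover have "real nk / real n * (1 - real CARD('d) / real nk) = (real nk - real CARD('d)) / real n"
        using nkpos n by (simp add: field_simps)
      ultimately show ?thesis unfolding I by linarith
    qed
    show ?thesis using upper lower by blast
  qed
  then show "integral\<^sup>L lborel (part_dens n mk S) \<le>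
           real (length S) / real n * (if length S \<le> 1 then 0 else (1 + 4 * real mk / real (length S)) ^ CARD('d))"
    and "(\<And>j. distinct (colS S j)) \<Longrightarrow>
           (real (length S) - real CARD('d)) / real n \<le> integral\<^sup>L lborel (part_dens n mk S)"
    unfolding nk_def by blast+
qed

lemma sum_len_filter:
  assumes "finite P" "\<And>v. v \<in> set ys \<Longrightarrow> \<kappa> v \<in> P"
  shows "(\<Sum>p\<in>P. length (filter (\<lambda>v. \<kappa> v = p) ys)) = length ys"
  using assms(2)
proof (induction ys)
  case Nil then show ?case by simp
next
  case (Cons y ys)
  have "(\<Sum>p\<in>P. length (filter (\<lambda>v. \<kappa> v = p) (y # ys)))
      = (\<Sum>p\<in>P. (if \<kappa> y = p then 1 else 0) + length (filter (\<lambda>v. \<kappa> v = p) ys))"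
    by (rule sum.cong) auto
  also have "\<dots> = (\<Sum>p\<in>P. (if \<kappa> y = p then 1 else 0)) + (\<Sum>p\<in>P. length (filter (\<lambda>v. \<kappa> v = p) ys))"
    by (rule sum.distrib)
  also have "(\<Sum>p\<in>P. (if \<kappa> y = p then 1 else 0)) = (1::nat)"
    using Cons.prems assms(1) by (simp add: sum.delta)
  finally show ?case using Cons by simp
qed

lemma bin_index_lt: "l \<ge> 1 \<Longrightarrow> bin_index l xs v j < l"
  unfolding bin_index_def Let_def by (auto simp: nat_less_iff)

definition PP :: "nat \<Rightarrow> ('d \<Rightarrow> nat) set" where
  "PP l = {p. \<forall>j. p j < l}"

lemma PP_PiE: "PP l = PiE UNIV (\<lambda>_. {..<l})"
  by (auto simp: PP_def PiE_UNIV_domain)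

lemma finite_PP: "finite (PP l :: ('d::finite \<Rightarrow> nat) set)"
  unfolding PP_PiE by (intro finite_PiE) auto

lemma card_PP: "card (PP l :: ('d::finite \<Rightarrow> nat) set) = l ^ CARD('d)"
  unfolding PP_PiE by (simp add: card_PiE)

definition Sp :: "nat \<Rightarrow> (real^'d) list \<Rightarrow> ('d \<Rightarrow> nat) \<Rightarrow> (real^'d) list" where
  "Sp l xs p = filter (\<lambda>v. (\<lambda>j. bin_index l xs v j) = p) xs"

definition UU :: "(nat \<Rightarrow> nat) \<Rightarrow> nat \<Rightarrow> nat \<Rightarrow> real" where
  "UU m d c = (if c \<le> 1 then 0 else (1 + 4 * real (m c) / real c) ^ d)"

lemma fhat_bounds:
  fixes xs :: "(real^'d) list"
  assumes l: "l \<ge> 1" and m: "\<And>c. m c > 0" and n: "length xs = n" "n > 0"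
  shows "integrable lborel (fhat l m xs)"
    and "integral\<^sup>L lborel (fhat l m xs) \<le>
           (\<Sum>p\<in>(PP l :: ('d \<Rightarrow> nat) set). real (length (Sp l xs p)) / real n * UU m CARD('d) (length (Sp l xs p)))"
    and "(\<And>j. distinct (map (\<lambda>v. v $ j) xs)) \<Longrightarrow>
           (real n - real CARD('d) * real l ^ CARD('d)) / real n \<le> integral\<^sup>L lborel (fhat l m xs)"
    and "(\<Sum>p\<in>(PP l :: ('d \<Rightarrow> nat) set). length (Sp l xs p)) = n"
proof -
  have fh: "fhat l m xs = (\<lambda>x. \<Sum>p\<in>(PP l :: ('d \<Rightarrow> nat) set). part_dens n (m (length (Sp l xs p))) (Sp l xs p) x)"
    unfolding fhat_def PP_def Sp_def Let_def n(1)[symmetric] by simp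
  have intg: "integrable lborel (part_dens n (m (length (Sp l xs p))) (Sp l xs p))" for p
    by (rule pd_bounds(1)) (use m n in auto)
  show "integrable lborel (fhat l m xs)"
    unfolding fh by (rule Bochner_Integration.integrable_sum) (rule intg)
  have I: "integral\<^sup>L lborel (fhat l m xs) =
     (\<Sum>p\<in>(PP l :: ('d \<Rightarrow> nat) set). integral\<^sup>L lborel (part_dens n (m (length (Sp l xs p))) (Sp l xs p)))"
    unfolding fh by (rule Bochner_Integration.integral_sum) (rule intg)
  show "integral\<^sup>L lborel (fhat l m xs) \<le>
           (\<Sum>p\<in>(PP l :: ('d \<Rightarrow> nat) set). real (length (Sp l xs p)) / real n * UU m CARD('d) (length (Sp l xs p)))"
    unfolding I UU_def by (rule sum_mono) (rule pd_bounds(2)[OF m n(2)])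
  show len: "(\<Sum>p\<in>(PP l :: ('d \<Rightarrow> nat) set). length (Sp l xs p)) = n"
    unfolding Sp_def n(1)[symmetric]
    by (rule sum_len_filter[OF finite_PP]) (use bin_index_lt[OF l] in \<open>auto simp: PP_def\<close>)
  assume dist: "\<And>j. distinct (map (\<lambda>v. v $ j) xs)"
  have "(\<Sum>p\<in>(PP l :: ('d \<Rightarrow> nat) set). (real (length (Sp l xs p)) - real CARD('d)) / real n)
      \<le> integral\<^sup>L lborel (fhat l m xs)"
    unfolding I
  proof (rule sum_mono)
    fix p :: "'d \<Rightarrow> nat"
    show "(real (length (Sp l xs p)) - real CARD('d)) / real n
        \<le> integral\<^sup>L lborel (part_dens n (m (length (Sp l xs p))) (Sp l xs p))"
      by (rule pd_bounds(3)[OF m n(2)]) (use dist in \<open>auto simp: colS_def Sp_def intro: distinct_map_filter\<close>)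
  qed
  also have "(\<Sum>p\<in>(PP l :: ('d \<Rightarrow> nat) set). (real (length (Sp l xs p)) - real CARD('d)) / real n)
      = (real (\<Sum>p\<in>(PP l :: ('d \<Rightarrow> nat) set). length (Sp l xs p)) - real (card (PP l :: ('d \<Rightarrow> nat) set)) * real CARD('d)) / real n"
    by (simp add: sum_divide_distrib[symmetric] sum_subtractf)
  also have "\<dots> = (real n - real CARD('d) * real l ^ CARD('d)) / real n"
    using len by (simp add: card_PP)
  finally show "(real n - real CARD('d) * real l ^ CARD('d)) / real n \<le> integral\<^sup>L lborel (fhat l m xs)" .
qed

lemma hyperplane_null:
  "{x::real^'d. x $ j = c} \<in> null_sets lborel"
proof -
  have "negligible {x::real^'d. x \<bullet> axis j 1 = c}"
    by (rule negligible_standard_hyperplane) simp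
  then have "negligible {x::real^'d. x $ j = c}"
    by (simp add: cart_eq_inner_axis)
  moreover have "{x::real^'d. x $ j = c} \<in> sets lborel"
    by measurable
  ultimately show ?thesis
    by (simp add: null_sets_completion_iff negligible_iff_null_sets)
qed

lemma no_ties:
  fixes M :: "'a measure" and X :: "nat \<Rightarrow> 'a \<Rightarrow> real^'d" and f :: "real^'d \<Rightarrow> real"
  assumes P: "prob_space M" and I: "prob_space.indep_vars M (\<lambda>_. borel) X UNIV"
    and D: "\<And>i. distributed M lborel (X i) (\<lambda>x. ennreal (f x))"
  shows "AE \<omega> in M. \<forall>i i' j. i \<noteq> i' \<longrightarrow> X i \<omega> $ j \<noteq> X i' \<omega> $ j"
proof -
  interpret prob_space M by fact
  have rv: "X i \<in> borel_measurable M" for i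
    using D[of i] by (auto simp: distributed_def)
  have atom: "emeasure (distr M borel (\<lambda>\<omega>. X i \<omega> $ j)) {c} = 0" for i j c
  proof -
    have "distr M borel (\<lambda>\<omega>. X i \<omega> $ j) = distr (distr M lborel (X i)) borel (\<lambda>x. x $ j)"
      using rv[of i] by (subst distr_distr) (auto simp: comp_def)
    also have "distr M lborel (X i) = density lborel f"
      using distributed_distr_eq_density[OF D[of i]] .
    finally have "emeasure (distr M borel (\<lambda>\<omega>. X i \<omega> $ j)) {c}
       = emeasure (density lborel f) ((\<lambda>x. x $ j) -` {c} \<inter> space (density lborel f))"
      by (simp add: emeasure_distr)
    also have "\<dots> = emeasure (density lborel f) {x. x $ j = c}"
      by (auto intro!: arg_cong2[where f=emeasure])
    also have "\<dots> = 0"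
      using hyperplane_null[of j c] D[of i]
      by (subst emeasure_density) (auto simp: distributed_def intro!: nn_integral_null_set)
    finally show ?thesis .
  qed
  have pair: "AE \<omega> in M. X i \<omega> $ j \<noteq> X i' \<omega> $ j" if "i \<noteq> i'" for i i' j
  proof -
    have "indep_var (PiM {i} (\<lambda>_. borel)) (\<lambda>\<omega>. restrict (\<lambda>i. X i \<omega>) {i})
                   (PiM {i'} (\<lambda>_. borel)) (\<lambda>\<omega>. restrict (\<lambda>i. X i \<omega>) {i'})"
      using that by (intro indep_var_restrict[OF I]) auto
    then have "indep_var borel ((\<lambda>F. F i $ j) \<circ> (\<lambda>\<omega>. restrict (\<lambda>i. X i \<omega>) {i}))
                   borel ((\<lambda>F. F i' $ j) \<circ> (\<lambda>\<omega>. restrict (\<lambda>i. X i \<omega>) {i'}))"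
      by (rule indep_var_compose) (auto intro!: measurable_compose[OF measurable_component_singleton])
    then have iv: "indep_var borel (\<lambda>\<omega>. X i \<omega> $ j) borel (\<lambda>\<omega>. X i' \<omega> $ j)"
      by (simp add: comp_def)
    define Y1 where "Y1 = (\<lambda>\<omega>. X i \<omega> $ j)"
    define Y2 where "Y2 = (\<lambda>\<omega>. X i' \<omega> $ j)"
    have Y1m: "Y1 \<in> borel_measurable M" and Y2m: "Y2 \<in> borel_measurable M"
      unfolding Y1_def Y2_def by (rule measurable_compose[OF rv], simp)+
    have eq: "distr M borel Y1 \<Otimes>\<^sub>M distr M borel Y2 = distr M (borel \<Otimes>\<^sub>M borel) (\<lambda>x. (Y1 x, Y2 x))"
      using iv unfolding indep_var_distribution_eq Y1_def Y2_def by blast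
    define Dg where "Dg = {p::real\<times>real. fst p = snd p}"
    have Dg: "Dg \<in> sets (borel \<Otimes>\<^sub>M borel)"
      unfolding Dg_def borel_prod by (intro borel_closed closed_Collect_eq continuous_intros)
    interpret S2: prob_space "distr M borel Y2"
      using Y2m by (rule prob_space_distr)
    have "emeasure M {\<omega>\<in>space M. Y1 \<omega> = Y2 \<omega>}
        = emeasure (distr M (borel \<Otimes>\<^sub>M borel) (\<lambda>x. (Y1 x, Y2 x))) Dg"
      using Dg Y1m Y2m by (subst emeasure_distr) (auto simp: Dg_def intro!: arg_cong2[where f=emeasure])
    also have "\<dots> = emeasure (distr M borel Y1 \<Otimes>\<^sub>M distr M borel Y2) Dg"
      by (simp add: eq)
    also have "\<dots> = (\<integral>\<^sup>+x. emeasure (distr M borel Y2) (Pair x -` Dg) \<partial>distr M borel Y1)"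
      using Dg by (subst S2.emeasure_pair_measure_alt) auto
    also have "\<dots> = (\<integral>\<^sup>+x. 0 \<partial>distr M borel Y1)"
    proof (intro nn_integral_cong)
      fix x
      have "Pair x -` Dg = {x}" by (auto simp: Dg_def)
      then show "emeasure (distr M borel Y2) (Pair x -` Dg) = 0"
        using atom[of i' j x] by (simp add: Y2_def)
    qed
    finally have "emeasure M {\<omega>\<in>space M. Y1 \<omega> = Y2 \<omega>} = 0" by simp
    moreover have "{\<omega>\<in>space M. Y1 \<omega> = Y2 \<omega>} \<in> sets M"
      using Y1m Y2m by measurable
    ultimately show ?thesis
      by (subst AE_iff_null) (auto simp: Y1_def Y2_def)
  qed
  have all: "AE \<omega> in M. \<forall>j. i \<noteq> i' \<longrightarrow> X i \<omega> $ j \<noteq> X i' \<omega> $ j" for i i'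
    proof (cases "i = i'")
      case True then show ?thesis by simp
    next
      case False
      have "AE \<omega> in M. \<forall>j. X i \<omega> $ j \<noteq> X i' \<omega> $ j"
        using pair[OF False] by (rule eventually_all_finite)
      then show ?thesis by simp
    qed
  have "AE \<omega> in M. \<forall>i i'. \<forall>j. i \<noteq> i' \<longrightarrow> X i \<omega> $ j \<noteq> X i' \<omega> $ j"
    using all by (simp add: AE_all_countable)
  then show ?thesis by simp
qed

lemma UU_lim:
  assumes "(\<lambda>c. real (m c) / real c) \<longlonglongrightarrow> 0"
  shows "(\<lambda>c. UU m d c) \<longlonglongrightarrow> 1"
proof -
  have "(\<lambda>c. (1 + 4 * (real (m c) / real c)) ^ d) \<longlonglongrightarrow> (1 + 4 * 0) ^ d"
    by (intro tendsto_intros assms)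
  then have lim: "(\<lambda>c. (1 + 4 * (real (m c) / real c)) ^ d) \<longlonglongrightarrow> 1" by simp
  have ev: "eventually (\<lambda>c. (1 + 4 * (real (m c) / real c)) ^ d = UU m d c) sequentially"
    using eventually_ge_at_top[of 2] by eventually_elim (auto simp: UU_def)
  show ?thesis using tendsto_cong[OF ev] lim by blast
qed

lemma upper_eps:
  fixes U :: "nat \<Rightarrow> real"
  assumes U1: "U \<longlonglongrightarrow> 1" and Unn: "\<And>c. 0 \<le> U c" and e: "e > 0"
  shows "\<exists>C\<ge>0. \<forall>n>0. \<forall>c. real c / real n * U c \<le> real c / real n * (1 + e) + C / real n"
proof -
  obtain K where K: "\<And>c. c \<ge> K \<Longrightarrow> norm (U c - 1) < e"
    using LIMSEQ_D[OF U1 e] by blast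
  define C where "C = real K * (\<Sum>c'<K. U c')"
  have C0: "C \<ge> 0" unfolding C_def by (intro mult_nonneg_nonneg sum_nonneg Unn) auto
  have "real c / real n * U c \<le> real c / real n * (1 + e) + C / real n" if n: "n > 0" for n c
  proof (cases "c \<ge> K")
    case True
    then have "U c \<le> 1 + e" using K[of c] by auto
    then have "real c / real n * U c \<le> real c / real n * (1 + e)"
      by (intro mult_left_mono) auto
    then show ?thesis using C0 n by (simp add: add_increasing2)
  next
    case False
    have "U c \<le> (\<Sum>c'<K. U c')"
      using False by (intro member_le_sum Unn) auto
    moreover have "real c \<le> real K" using False by simp
    ultimately have "real c * U c \<le> C" unfolding C_def
      by (intro mult_mono) (auto intro: Unn sum_nonneg)
    then have "real c / real n * U c \<le> C / real n"
      using n by (simp add: divide_right_mono)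
    moreover have "0 \<le> real c / real n * (1 + e)" using e by simp
    ultimately show ?thesis by linarith
  qed
  then show ?thesis using C0 by blast
qed

theorem proposition9:
  fixes M :: "'a measure" and X :: "nat \<Rightarrow> 'a \<Rightarrow> real^'d"
    and f :: "real^'d \<Rightarrow> real" and l :: "nat \<Rightarrow> nat" and m :: "nat \<Rightarrow> nat"
  assumes "prob_space M"
    and "prob_space.indep_vars M (\<lambda>_. borel) X UNIV"
    and "\<And>i. distributed M lborel (X i) (\<lambda>x. ennreal (f x))"
    and "continuous_on UNIV f" and "\<And>x. f x \<ge> 0"
    and "\<And>n. l n \<ge> 1"
    and "(\<lambda>n. real (l n) ^ CARD('d)) \<in> o(\<lambda>n. real n)"
    and "\<And>c. m c > 0"
    and "(\<lambda>c. real (m c) / real c) \<longlonglongrightarrow> 0"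
  shows "AE \<omega> in M. (\<lambda>n. integral\<^sup>L lborel (fhat (l n) m (map (\<lambda>v. X v \<omega>) [0..<n])))
                      \<longlonglongrightarrow> 1"
proof -
  note ae = no_ties[OF assms(1,2,3)]
  define Lr where "Lr = (\<lambda>n. real (l n) ^ CARD('d))"
  have Lr0: "(\<lambda>n. Lr n / real n) \<longlonglongrightarrow> 0"
    unfolding Lr_def by (rule smalloD_tendsto[OF assms(7)])
  define U where "U = UU m CARD('d)"
  have U1: "U \<longlonglongrightarrow> 1" unfolding U_def by (rule UU_lim[OF assms(9)])
  have Unn: "0 \<le> U c" for c unfolding U_def UU_def by simp
  show ?thesis
    using ae
  proof eventually_elim
    case (elim \<omega>)
    define xs where "xs = (\<lambda>n. map (\<lambda>v. X v \<omega>) [0..<n])"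
    define I where "I = (\<lambda>n. integral\<^sup>L lborel (fhat (l n) m (xs n)))"
    have len: "length (xs n) = n" for n by (simp add: xs_def)
    have dist: "distinct (map (\<lambda>v. v $ j) (xs n))" for n j
    proof -
      have "inj_on (\<lambda>i. X i \<omega> $ j) (set [0..<n])"
        using elim by (auto simp: inj_on_def)
      then show ?thesis by (simp add: xs_def distinct_map comp_def)
    qed
    have lower: "1 - real CARD('d) * (Lr n / real n) \<le> I n" if n: "n > 0" for n
    proof -
      have "(real n - real CARD('d) * real (l n) ^ CARD('d)) / real n \<le> I n"
        unfolding I_def by (rule fhat_bounds(3)[OF assms(6) assms(8) len n]) (rule dist)
      moreover have "(real n - real CARD('d) * real (l n) ^ CARD('d)) / real n = 1 - real CARD('d) * (Lr n / real n)"
        using n by (simp add: Lr_def field_simps)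
      ultimately show ?thesis by simp
    qed
    have upper: "\<exists>C\<ge>0. \<forall>n>0. I n \<le> 1 + e + Lr n / real n * C" if e: "e > 0" for e
    proof -
      obtain C where C0: "C \<ge> 0" and C: "\<And>n c. n > 0 \<Longrightarrow> real c / real n * U c \<le> real c / real n * (1 + e) + C / real n"
        using upper_eps[OF U1 Unn e] by blast
      have "I n \<le> 1 + e + Lr n / real n * C" if n: "n > 0" for n
      proof -
        define P where "P = (PP (l n) :: ('d \<Rightarrow> nat) set)"
        define len where "len = (\<lambda>p. length (Sp (l n) (xs n) p))"
        have "I n \<le> (\<Sum>p\<in>P. real (len p) / real n * U (len p))"
          unfolding I_def P_def len_def U_def by (rule fhat_bounds(2)[OF assms(6) assms(8) len n])
        also have "\<dots> \<le> (\<Sum>p\<in>P. real (len p) / real n * (1 + e) + C / real n)"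
          by (rule sum_mono) (rule C[OF n])
        also have "\<dots> = (1 + e) * (real (\<Sum>p\<in>P. len p) / real n) + real (card P) * C / real n"
          by (simp add: sum.distrib sum_divide_distrib[symmetric] sum_distrib_right[symmetric] sum_distrib_left[symmetric] field_simps)
        also have "(\<Sum>p\<in>P. len p) = n"
          unfolding P_def len_def by (rule fhat_bounds(4)[OF assms(6) assms(8) len n])
        also have "real (card P) = Lr n"
          unfolding P_def Lr_def by (simp add: card_PP)
        finally show ?thesis using n by (simp add: field_simps)
      qed
      then show ?thesis using C0 by blast
    qed
    show "I \<longlonglongrightarrow> 1"
    proof (rule LIMSEQ_I)
      fix r :: real assume r: "r > 0"
      obtain C where C0: "C \<ge> 0" and C: "\<And>n. n > 0 \<Longrightarrow> I n \<le> 1 + r / 2 + Lr n / real n * C"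
        using upper[of "r / 2"] r by auto
      have t1: "(\<lambda>n. Lr n / real n * C) \<longlonglongrightarrow> 0 * C" by (intro tendsto_intros Lr0)
      have t2: "(\<lambda>n. real CARD('d) * (Lr n / real n)) \<longlonglongrightarrow> real CARD('d) * 0" by (intro tendsto_intros Lr0)
      have "eventually (\<lambda>n. Lr n / real n * C < r / 2) sequentially"
        using order_tendstoD(2)[OF t1, of "r / 2"] r by simp
      moreover have "eventually (\<lambda>n. real CARD('d) * (Lr n / real n) < r) sequentially"
        using order_tendstoD(2)[OF t2, of r] r by simp
      moreover have "eventually (\<lambda>n. n > 0) sequentially" by (rule eventually_gt_at_top)
      ultimately have "eventually (\<lambda>n. norm (I n - 1) < r) sequentially"
      proof eventually_elim
        case (elim n)
        then have "1 - r < I n" "I n < 1 + r" using lower[of n] C[of n] by linarith+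
        then show ?case by (simp add: abs_less_iff)
      qed
      then show "\<exists>no. \<forall>n\<ge>no. norm (I n - 1) < r"
        by (simp add: eventually_sequentially)
    qed
  qed
qed

end
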